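(* Let $A$ be a finite set, $n\ge3$, $\rho\subseteq A^n$ with $1\overset{\rho}{\sim}2$, and let $(a_1,\dots,a_n)\in A^n\setminus\rho$ and $b_1,\dots,b_n\in A$ with $b_i\neq a_i$ for all $i$, such that $$(\{a_1,b_1\}\times\dots\times\{a_n,b_n\})\setminus\{(a_1,a_2,a_3,\dots,a_n),(b_1,b_2,a_3,\dots,a_n)\}\subseteq\rho.$$ Then $\rho$ is a key relation and $(a_1,\dots,a_n)$ is a key tuple for $\rho$.
   Context: A unary vector-function is a tuple $\Psi=(\psi_1,\dots,\psi_n)$ of maps $\psi_i:A\to A$ acting coordinatewise; it preserves $\rho$ if $\Psi(\rho)\subseteq\rho$. $\rho\subseteq A^n$ is a key relation if there is $\beta\in A^n\setminus\rho$ (a key tuple) such that every $\alpha\in A^n\setminus\rho$ is mapped to $\beta$ by some unary vector-function preserving $\rho$. The relation $\overset{\rho}{\sim}$: for $i\ne j$, $i\overset{\rho}{\sim}j$ iff there do NOT exist $c_1,\dots,c_n,d_i,d_j\in A$ with $(c_1,\dots,c_n)\notin\rho$ while the tuples obtained by replacing $c_i$ by $d_i$, replacing $c_j$ by $d_j$, and replacing both, all lie in $\rho$. *)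

theory Defs
  imports Main
begin

text \<open>Tuples in A^n are lists of length n over A; coordinates are indexed 0..n-1
  (coordinate i+1 of the paper is list index i).\<close>

definition tuples :: "'a set \<Rightarrow> nat \<Rightarrow> 'a list set" where
  "tuples A n = {x. length x = n \<and> set x \<subseteq> A}"

definition vec_funs :: "'a set \<Rightarrow> nat \<Rightarrow> ('a \<Rightarrow> 'a) list set" where
  "vec_funs A n = {\<Psi>. length \<Psi> = n \<and> (\<forall>i<n. \<forall>a\<in>A. (\<Psi> ! i) a \<in> A)}"

definition vapply :: "('a \<Rightarrow> 'a) list \<Rightarrow> 'a list \<Rightarrow> 'a list" where
  "vapply \<Psi> x = map2 (\<lambda>f a. f a) \<Psi> x"

definition preserves :: "('a \<Rightarrow> 'a) list \<Rightarrow> 'a list set \<Rightarrow> bool" where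
  "preserves \<Psi> \<rho> \<longleftrightarrow> (\<forall>x\<in>\<rho>. vapply \<Psi> x \<in> \<rho>)"

definition key_tuple :: "'a set \<Rightarrow> nat \<Rightarrow> 'a list set \<Rightarrow> 'a list \<Rightarrow> bool" where
  "key_tuple A n \<rho> \<beta> \<longleftrightarrow> \<beta> \<in> tuples A n - \<rho> \<and>
     (\<forall>\<alpha>\<in>tuples A n - \<rho>. \<exists>\<Psi>\<in>vec_funs A n. preserves \<Psi> \<rho> \<and> vapply \<Psi> \<alpha> = \<beta>)"

definition key_relation :: "'a set \<Rightarrow> nat \<Rightarrow> 'a list set \<Rightarrow> bool" where
  "key_relation A n \<rho> \<longleftrightarrow> \<rho> \<subseteq> tuples A n \<and> (\<exists>\<beta>. key_tuple A n \<rho> \<beta>)"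

definition rho_sim :: "'a set \<Rightarrow> nat \<Rightarrow> 'a list set \<Rightarrow> nat \<Rightarrow> nat \<Rightarrow> bool" where
  "rho_sim A n \<rho> i j \<longleftrightarrow> i \<noteq> j \<and> i < n \<and> j < n \<and>
     \<not> (\<exists>c\<in>tuples A n. \<exists>di\<in>A. \<exists>dj\<in>A. c \<notin> \<rho> \<and> c[i := di] \<in> \<rho> \<and> c[j := dj] \<in> \<rho>
           \<and> c[i := di, j := dj] \<in> \<rho>)"

end

theory Submission
  imports Defs
begin

theorem mainTheorem8:
  fixes A :: "'a set" and n :: nat and \<rho> :: "'a list set" and a b :: "'a list"
  assumes "finite A" and "n \<ge> 3"
    and "\<rho> \<subseteq> tuples A n"
    and "rho_sim A n \<rho> 0 1"
    and "a \<in> tuples A n - \<rho>"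
    and "b \<in> tuples A n"
    and "\<forall>i<n. b ! i \<noteq> a ! i"
    and "{x \<in> tuples A n. \<forall>i<n. x ! i = a ! i \<or> x ! i = b ! i}
           - {a, a[0 := b ! 0, 1 := b ! 1]} \<subseteq> \<rho>"
  shows "key_relation A n \<rho> \<and> key_tuple A n \<rho> a"
proof -
  note n3 = assms(2) and rt = assms(3) and sim = assms(4) and aa = assms(5) and bb = assms(6)
    and ab = assms(7) and box = assms(8)
  have la: "length a = n" and sa: "set a \<subseteq> A" using aa by (auto simp: tuples_def)
  have lb: "length b = n" and sb: "set b \<subseteq> A" using bb by (auto simp: tuples_def)
  have ab01: "b!0 \<noteq> a!0" "b!1 \<noteq> a!1" using ab n3 by auto
  have aA: "\<And>i. i < n \<Longrightarrow> a ! i \<in> A" using sa la nth_mem by blast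
  have bA: "\<And>i. i < n \<Longrightarrow> b ! i \<in> A" using sb lb nth_mem by blast
  have main: "\<exists>\<Psi>\<in>vec_funs A n. preserves \<Psi> \<rho> \<and> vapply \<Psi> \<alpha> = a"
    if al: "\<alpha> \<in> tuples A n - \<rho>" for \<alpha>
  proof -
    have lal: "length \<alpha> = n" and salp: "set \<alpha> \<subseteq> A" and anr: "\<alpha> \<notin> \<rho>"
      using al by (auto simp: tuples_def)
    have alA: "\<And>i. i < n \<Longrightarrow> \<alpha> ! i \<in> A" using salp lal nth_mem by blast
    define T where "T u v \<longleftrightarrow> \<alpha>[0 := u, 1 := v] \<in> \<rho>" for u v
    have difun: False if "\<not> T (\<alpha>!0) v" "T u v" "T u w" "T (\<alpha>!0) w" "u \<in> A" "v \<in> A" "w \<in> A"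
      for u v w
    proof -
      let ?c = "\<alpha>[1 := v]"
      have c1: "?c \<in> tuples A n" using lal salp \<open>v \<in> A\<close> by (auto simp: tuples_def dest: set_update_subset_insert[THEN subsetD])
      have e0: "?c = \<alpha>[0 := \<alpha>!0, 1 := v]" by simp
      have "?c \<notin> \<rho>" using that(1) e0 unfolding T_def by metis
      moreover have "?c[0 := u] \<in> \<rho>" using that(2) unfolding T_def by (simp add: list_update_swap)
      moreover have "?c[1 := w] \<in> \<rho>" using that(4) unfolding T_def by simp
      moreover have "?c[0 := u, 1 := w] \<in> \<rho>" using that(3) unfolding T_def
        by (simp add: list_update_swap)
      ultimately show False using sim c1 that(5,7) unfolding rho_sim_def by blast
    qed
    define \<psi> where "\<psi> i = (if i = 0 then (\<lambda>u. if u = \<alpha>!0 \<or> (\<exists>w\<in>A. T u w \<and> T (\<alpha>!0) w) then a!0 else b!0)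
       else if i = 1 then (\<lambda>v. if T (\<alpha>!0) v then b!1 else a!1)
       else (\<lambda>x. if x = \<alpha>!i then a!i else b!i))" for i
    define \<Psi> where "\<Psi> = map \<psi> [0..<n]"
    have vap: "length (vapply \<Psi> x) = n \<and> (\<forall>i<n. vapply \<Psi> x ! i = \<psi> i (x!i))"
      if "length x = n" for x
      using that by (simp add: vapply_def \<Psi>_def)
    have psiab: "\<psi> i u = a!i \<or> \<psi> i u = b!i" for i u by (simp add: \<psi>_def)
    have vf: "\<Psi> \<in> vec_funs A n"
      unfolding vec_funs_def \<Psi>_def using psiab aA bA by (auto) (metis)
    have Ta: "\<not> T (\<alpha>!0) (\<alpha>!1)" using anr unfolding T_def by simp
    have img: "vapply \<Psi> \<alpha> = a"
    proof (rule nth_equalityI)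
      show "length (vapply \<Psi> \<alpha>) = length a" using vap[OF lal] la by simp
      fix i assume "i < length (vapply \<Psi> \<alpha>)"
      then have i: "i < n" using vap[OF lal] by simp
      then show "vapply \<Psi> \<alpha> ! i = a ! i" using vap[OF lal] Ta by (simp add: \<psi>_def)
    qed
    have pres: "preserves \<Psi> \<rho>" unfolding preserves_def
    proof
      fix x assume xr: "x \<in> \<rho>"
      then have lx: "length x = n" and sx: "set x \<subseteq> A" using rt by (auto simp: tuples_def)
      have xA: "\<And>i. i < n \<Longrightarrow> x ! i \<in> A" using sx lx nth_mem by blast
      let ?y = "vapply \<Psi> x"
      have ly: "length ?y = n" and yi: "\<And>i. i<n \<Longrightarrow> ?y ! i = \<psi> i (x!i)" using vap[OF lx] by auto
      have yt: "?y \<in> tuples A n" unfolding tuples_def using ly yi psiab aA bA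
        by (auto simp: in_set_conv_nth) metis
      have ybox: "\<forall>i<n. ?y ! i = a ! i \<or> ?y ! i = b ! i" using yi psiab by simp
      have "?y \<noteq> a \<and> ?y \<noteq> a[0 := b ! 0, 1 := b ! 1]"
      proof (cases "\<exists>i. 2 \<le> i \<and> i < n \<and> x!i \<noteq> \<alpha>!i")
        case True
        then obtain i where i: "2 \<le> i" "i < n" "x!i \<noteq> \<alpha>!i" by blast
        then have "?y ! i = b ! i" using yi by (simp add: \<psi>_def)
        moreover have "a[0 := b ! 0, 1 := b ! 1] ! i = a ! i" using i by simp
        ultimately show ?thesis using ab i by metis
      next
        case False
        have xe: "x = \<alpha>[0 := x!0, 1 := x!1]"
        proof (rule nth_equalityI)
          show "length x = length (\<alpha>[0 := x!0, 1 := x!1])" using lx lal by simp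
          fix i assume "i < length x"
          then show "x ! i = \<alpha>[0 := x!0, 1 := x!1] ! i" using False lx lal
            by (cases "i = 0"; cases "i = 1") (auto simp: nth_list_update)
        qed
        have Tx: "T (x!0) (x!1)" using xr xe unfolding T_def by metis
        have y0: "?y ! 0 = \<psi> 0 (x!0)" and y1: "?y ! 1 = \<psi> 1 (x!1)" using yi n3 by auto
        have x0A: "x!0 \<in> A" and x1A: "x!1 \<in> A" using xA n3 by auto
        have A0: "\<alpha>!0 \<in> A" using alA n3 by auto
        have "?y \<noteq> a"
        proof
          assume "?y = a"
          then have h0: "\<psi> 0 (x!0) = a!0" and h1: "\<psi> 1 (x!1) = a!1" using y0 y1 by auto
          from h1 have nT: "\<not> T (\<alpha>!0) (x!1)" using ab01 by (auto simp: \<psi>_def split: if_splits)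
          from h0 have "x!0 = \<alpha>!0 \<or> (\<exists>w\<in>A. T (x!0) w \<and> T (\<alpha>!0) w)"
            using ab01 by (auto simp: \<psi>_def split: if_splits)
          then show False using nT Tx difun x0A x1A by metis
        qed
        moreover have "?y \<noteq> a[0 := b ! 0, 1 := b ! 1]"
        proof
          assume "?y = a[0 := b ! 0, 1 := b ! 1]"
          then have h0: "\<psi> 0 (x!0) = b!0" and h1: "\<psi> 1 (x!1) = b!1" using y0 y1 la n3 by auto
          from h1 have T1: "T (\<alpha>!0) (x!1)" using ab01 by (auto simp: \<psi>_def split: if_splits)
          from h0 have "\<not> (\<exists>w\<in>A. T (x!0) w \<and> T (\<alpha>!0) w)"
            using ab01 by (auto simp: \<psi>_def split: if_splits)
          then show False using T1 Tx x1A by blast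
        qed
        ultimately show ?thesis by blast
      qed
      then show "?y \<in> \<rho>" using box yt ybox by blast
    qed
    show ?thesis using vf pres img by blast
  qed
  have kt: "key_tuple A n \<rho> a" unfolding key_tuple_def using aa main by blast
  then show ?thesis unfolding key_relation_def using rt by blast
qed

end
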